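(* Let the sequence $(y_k)_{k\in\mathbb{N}}$ be defined by $y_1=2$ and $(2k-1)^2y_k=4(k-1)^2y_{k-1}+2$ for $k\ge2$. Then $$\frac{\ln k}{2k}<y_k\le\frac{\ln k+4}{2k}\qquad\text{for all } k\in\mathbb{N}.$$ *)

theory Defs
  imports Complex_Main
begin

text \<open>The sequence y_k (k \<ge> 1): y_1 = 2 and (2k-1)^2 y_k = 4(k-1)^2 y_{k-1} + 2 for k \<ge> 2.
  The value at index 0 is an irrelevant placeholder.\<close>
fun y :: "nat \<Rightarrow> real" where
  "y 0 = 0"
| "y (Suc 0) = 2"
| "y (Suc (Suc n)) =
     (4 * (real (Suc n))^2 * y (Suc n) + 2) / (2 * real (Suc (Suc n)) - 1)^2"

lemma y_rec:
  assumes "k \<ge> 2"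
  shows "(2 * real k - 1)^2 * y k = 4 * (real k - 1)^2 * y (k - 1) + 2"
proof -
  obtain n where k: "k = Suc (Suc n)" using assms by (metis add_2_eq_Suc le_Suc_ex)
  have "(2 * real k - 1) \<noteq> 0" using assms by simp
  then show ?thesis unfolding k by (simp add: field_simps)
qed

end

theory Submission
  imports Defs "HOL-Analysis.Harmonic_Numbers"
begin

lemma step_rel:
  assumes "k \<ge> 1"
  shows "(2 * real k + 1)^2 * (2 * real (Suc k) * y (Suc k))
         = 4 * (real k + 1) * real k * (2 * real k * y k) + 4 * (real k + 1)"
proof -
  have "(2 * real (Suc k) - 1)^2 * y (Suc k) = 4 * (real (Suc k) - 1)^2 * y (Suc k - 1) + 2"
    using y_rec[of "Suc k"] assms by simp
  then have h: "(2 * real k + 1)^2 * y (Suc k) = 4 * (real k)^2 * y k + 2"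
    by (simp add: algebra_simps)
  have "(2 * real k + 1)^2 * (2 * real (Suc k) * y (Suc k))
        = 2 * (real k + 1) * ((2 * real k + 1)^2 * y (Suc k))" by (simp add: algebra_simps)
  also have "\<dots> = 2 * (real k + 1) * (4 * (real k)^2 * y k + 2)" by (simp only: h)
  finally show ?thesis by (simp add: algebra_simps power2_eq_square)
qed

lemma inv_bounds:
  fixes k :: nat
  assumes "k \<ge> 1"
  shows "ln (real k) * (1 + 1 / (3 * real k)) \<le> 2 * real k * y k
         \<and> 2 * real k * y k \<le> ln (real k) + 4"
  using assms
proof (induction k rule: nat_induct_at_least)
  case base
  then show ?case by simp
next
  case (Suc k)
  define m where "m = real k"
  define l where "l = ln m"
  define d where "d = ln (m + 1) - l"
  define U where "U = 2 * real k * y k"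
  define U' where "U' = 2 * real (Suc k) * y (Suc k)"
  have m1: "m \<ge> 1" using Suc by (simp add: m_def)
  have l0: "l \<ge> 0" using m1 by (simp add: l_def)
  have rel: "(2 * m + 1)^2 * U' = 4 * (m + 1) * m * U + 4 * (m + 1)"
    using step_rel[OF Suc(1)] by (simp add: m_def U_def U'_def)
  have IH1: "l * (1 + 1 / (3 * m)) \<le> U" and IH2: "U \<le> l + 4"
    using Suc(2) by (simp_all add: m_def l_def U_def)
  have dup: "d \<le> (2 * m + 1) / (2 * m * (m + 1))"
  proof -
    have "d \<le> 1 * (inverse m + inverse (m + 1)) / 2"
      using ln_inverse_approx_le[of m 1] m1 by (simp add: d_def l_def)
    also have "\<dots> = (2 * m + 1) / (2 * m * (m + 1))" using m1
      by (simp add: field_simps)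
    finally show ?thesis .
  qed
  have dlow: "d \<ge> 1 / (m + 1)"
  proof -
    have "ln (m / (m + 1)) \<le> m / (m + 1) - 1" using m1 by (intro ln_le_minus_one) simp
    moreover have "ln (m / (m + 1)) = l - ln (m + 1)" using m1 by (simp add: ln_div l_def)
    moreover have "m / (m + 1) - 1 = - (1 / (m + 1))" using m1 by (simp add: field_simps)
    ultimately show ?thesis by (simp add: d_def)
  qed
  have pos: "(2 * m + 1)^2 > 0" using m1 by simp
  have U'eq: "U' = (4 * (m + 1) * m * U + 4 * (m + 1)) / (2 * m + 1)^2"
    using rel pos by (simp add: field_simps)
  have lnS: "ln (real (Suc k)) = l + d" by (simp add: d_def m_def add.commute)
  have low: "(l + d) * (1 + 1 / (3 * (m + 1))) \<le> U'"
  proof -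
    have a: "l * (1 + 1 / (3 * m)) * (4 * (m + 1) * m) \<le> U * (4 * (m + 1) * m)"
      using IH1 m1 by (intro mult_right_mono) auto
    have b: "l * (1 + 1 / (3 * m)) * (4 * (m + 1) * m) = l * (4 * (m + 1) * (3 * m + 1) / 3)"
      using m1 by (simp add: field_simps)
    have c: "d * ((3 * m + 4) * (2 * m + 1)^2) \<le> (2 * m + 1) / (2 * m * (m + 1)) * ((3 * m + 4) * (2 * m + 1)^2)"
      using dup m1 by (intro mult_right_mono) auto
    have poly: "(2 * m + 1)^3 * (3 * m + 4) \<le> 24 * m * (m + 1)^3"
    proof -
      have e: "24 * m * (m + 1)^3 - (2 * m + 1)^3 * (3 * m + 4) = 4*m^3 + 6 * m^2 - 3*m - 4"
        by (simp add: algebra_simps power2_eq_square power3_eq_cube)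
      have "m^3 \<ge> 1" using m1 by simp
      moreover have "m^2 \<ge> m" using m1 by (simp add: power2_eq_square)
      ultimately have "4*m^3 + 6 * m^2 - 3*m - 4 \<ge> 0" using m1 by linarith
      with e show ?thesis by linarith
    qed
    have c2: "(2 * m + 1) / (2 * m * (m + 1)) * ((3 * m + 4) * (2 * m + 1)^2) \<le> 12 * (m + 1)^2"
    proof -
      have "(2 * m + 1) / (2 * m * (m + 1)) * ((3 * m + 4) * (2 * m + 1)^2)
          = (2 * m + 1)^3 * (3 * m + 4) / (2 * m * (m + 1))" by (simp add: power2_eq_square power3_eq_cube)
      also have "\<dots> \<le> 24 * m * (m + 1)^3 / (2 * m * (m + 1))"
        using poly m1 by (intro divide_right_mono) auto
      also have "\<dots> = 12 * (m + 1)^2 * (2 * m * (m + 1)) / (2 * m * (m + 1))"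
        by (simp add: algebra_simps power2_eq_square power3_eq_cube)
      also have "\<dots> = 12 * (m + 1)^2" using m1 by (intro nonzero_mult_div_cancel_right) simp
      finally show ?thesis .
    qed
    have lm: "l * m \<ge> 0" using l0 m1 by simp
    have goal: "(l + d) * (1 + 1 / (3 * (m + 1))) * (2 * m + 1)^2 \<le> 4 * (m + 1) * m * U + 4 * (m + 1)"
    proof -
      have "(l + d) * (1 + 1 / (3 * (m + 1))) * (2 * m + 1)^2
          = (l * ((3 * m + 4) * (2 * m + 1)^2) + d * ((3 * m + 4) * (2 * m + 1)^2)) / (3 * (m + 1))"
        using m1 by (simp add: field_simps)
      also have "\<dots> \<le> (l * (4 * (m + 1)^2 * (3 * m + 1)) + 12 * (m + 1)^2) / (3 * (m + 1))"
      proof (intro divide_right_mono)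
        have "l * ((3 * m + 4) * (2 * m + 1)^2) + l * m = l * (4 * (m + 1)^2 * (3 * m + 1))"
          by (simp add: algebra_simps power2_eq_square)
        then show "l * ((3 * m + 4) * (2 * m + 1)^2) + d * ((3 * m + 4) * (2 * m + 1)^2)
            \<le> l * (4 * (m + 1)^2 * (3 * m + 1)) + 12 * (m + 1)^2"
          using c c2 lm by linarith
      qed (use m1 in auto)
      also have "\<dots> = l * (4 * (m + 1) * (3 * m + 1) / 3) * 1 + 4 * (m + 1)"
        using m1 by (simp add: field_simps power2_eq_square)
      also have "\<dots> \<le> 4 * (m + 1) * m * U + 4 * (m + 1)"
        using a b by (simp add: algebra_simps)
      finally show ?thesis .
    qed
    show ?thesis unfolding U'eq using goal pos by (simp add: field_simps)
  qed
  have up: "U' \<le> l + d + 4"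
  proof -
    have a: "U * (4 * (m + 1) * m) \<le> (l + 4) * (4 * (m + 1) * m)"
      using IH2 m1 by (intro mult_right_mono) auto
    have b: "4 * m * (m + 1) \<le> d * (2 * m + 1)^2 * (m + 1)"
    proof -
      have "4 * m * (m + 1) \<le> (2 * m + 1)^2" by (simp add: power2_eq_square algebra_simps)
      also have "\<dots> = (1 / (m + 1)) * (2 * m + 1)^2 * (m + 1)" using m1 by simp
      also have "\<dots> \<le> d * (2 * m + 1)^2 * (m + 1)"
        using dlow m1 by (intro mult_right_mono) auto
      finally show ?thesis .
    qed
    have b2: "4 * m \<le> d * (2 * m + 1)^2"
      using b m1 by (simp add: mult.assoc mult.commute[of _ "m+1"])
    have c: "l * (4 * (m + 1) * m) \<le> l * (2 * m + 1)^2"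
      using l0 by (intro mult_left_mono) (auto simp: power2_eq_square algebra_simps)
    have "4 * (m + 1) * m * U + 4 * (m + 1) \<le> (l + d + 4) * (2 * m + 1)^2"
    proof -
      have "(l + d + 4) * (2 * m + 1)^2 = l * (2 * m + 1)^2 + d * (2 * m + 1)^2 + 16 * m^2 + 16 * m + 4"
        by (simp add: algebra_simps power2_eq_square)
      moreover have "(l + 4) * (4 * (m + 1) * m) = l * (4 * (m + 1) * m) + 16 * m^2 + 16 * m"
        by (simp add: algebra_simps power2_eq_square)
      ultimately show ?thesis using a b2 c by (simp add: algebra_simps)
    qed
    then show ?thesis unfolding U'eq using pos by (simp add: field_simps)
  qed
  have rs: "real (Suc k) = m + 1" by (simp add: m_def)
  have ld: "ln (m + 1) = l + d" by (simp add: d_def)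
  have low': "ln (m + 1) * (1 + 1 / (3 * (m + 1))) \<le> 2 * (m + 1) * y (Suc k)"
    using low unfolding ld U'_def rs .
  have up': "2 * (m + 1) * y (Suc k) \<le> ln (m + 1) + 4"
    using up unfolding ld U'_def rs .
  show ?case unfolding rs using low' up' by blast
qed

theorem lemma4p4:
  fixes k :: nat
  assumes "k \<ge> 1"
  shows "ln (real k) / (2 * real k) < y k \<and> y k \<le> (ln (real k) + 4) / (2 * real k)"
proof -
  have B: "ln (real k) * (1 + 1 / (3 * real k)) \<le> 2 * real k * y k"
    "2 * real k * y k \<le> ln (real k) + 4" using inv_bounds[OF assms] by auto
  have kp: "real k > 0" using assms by simp
  have lo: "ln (real k) < 2 * real k * y k"
  proof (cases "k = 1")
    case True then show ?thesis by simp
  next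
    case False
    then have "ln (real k) > 0" using assms by simp
    then have "ln (real k) < ln (real k) * (1 + 1 / (3 * real k))"
      using kp by (simp add: field_simps)
    then show ?thesis using B(1) by linarith
  qed
  show ?thesis using lo B(2) kp by (simp add: field_simps)
qed

end
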